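(* Let $F$ be a field. Every almost identity PC-map $\mathrm{UT}(\infty,F)\to\mathrm{UT}(\infty,F)$ is the identity map.
   Context: $\mathrm{UT}(\infty,F)$ is the group of all $\mathbb N\times\mathbb N$ matrices over $F$ with $1$ on the diagonal and $0$ below it. $e$ is the identity, $e_{ij}$ the matrix unit, $t_{ij}(\alpha)=e+\alpha e_{ij}$ ($i<j$). $[x,y]=xyx^{-1}y^{-1}$. A PC-map is a bijection $\varphi$ of the group with $\varphi([x,y])=[\varphi(x),\varphi(y)]$ for all $x,y$; it is almost identity if $\varphi(t_{ij}(\alpha))=t_{ij}(\alpha)$ for all $i<j$, $\alpha\in F$. *)

theory Defs
  imports Main
begin

type_synonym 'a imat = "nat \<Rightarrow> nat \<Rightarrow> 'a"

definition UT :: "('a::field) imat set" where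
  "UT = {A. \<forall>i. A i i = 1 \<and> (\<forall>j<i. A i j = 0)}"

text \<open>Matrix product; for upper triangular matrices the sum over k is finite (i <= k <= j).\<close>
definition ut_mult :: "('a::field) imat \<Rightarrow> 'a imat \<Rightarrow> 'a imat" where
  "ut_mult A B = (\<lambda>i j. \<Sum>k\<in>{i..j}. A i k * B k j)"

definition ut_one :: "('a::field) imat" where
  "ut_one = (\<lambda>i j. if i = j then 1 else 0)"

definition ut_inv :: "('a::field) imat \<Rightarrow> 'a imat" where
  "ut_inv A = (THE B. B \<in> UT \<and> ut_mult A B = ut_one)"

definition ut_comm :: "('a::field) imat \<Rightarrow> 'a imat \<Rightarrow> 'a imat" where
  "ut_comm x y = ut_mult (ut_mult (ut_mult x y) (ut_inv x)) (ut_inv y)"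

definition transv :: "nat \<Rightarrow> nat \<Rightarrow> ('a::field) \<Rightarrow> 'a imat" where
  "transv i j \<alpha> = (\<lambda>k l. ut_one k l + (if k = i \<and> l = j then \<alpha> else 0))"

definition PC_map :: "(('a::field) imat \<Rightarrow> 'a imat) \<Rightarrow> bool" where
  "PC_map \<phi> \<longleftrightarrow> bij_betw \<phi> UT UT \<and>
     (\<forall>x\<in>UT. \<forall>y\<in>UT. \<phi> (ut_comm x y) = ut_comm (\<phi> x) (\<phi> y))"

definition almost_identity :: "(('a::field) imat \<Rightarrow> 'a imat) \<Rightarrow> bool" where
  "almost_identity \<phi> \<longleftrightarrow> (\<forall>i j \<alpha>. i < j \<longrightarrow> \<phi> (transv i j \<alpha>) = transv i j \<alpha>)"

end

theory Submission
  imports Defs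
begin

definition upper :: "('a::field) imat \<Rightarrow> bool" where
  "upper A \<longleftrightarrow> (\<forall>k r. r < k \<longrightarrow> A k r = 0)"

lemma UT_upper: "A \<in> UT \<Longrightarrow> upper A"
  by (auto simp: UT_def upper_def)

lemma UT_diag: "A \<in> UT \<Longrightarrow> A i i = 1"
  by (auto simp: UT_def)

lemma UT_low: "A \<in> UT \<Longrightarrow> r < k \<Longrightarrow> A k r = 0"
  by (auto simp: UT_def)

lemma upper_low: "upper A \<Longrightarrow> r < k \<Longrightarrow> A k r = 0"
  by (auto simp: upper_def)

lemma mult_le:
  assumes "upper A" "upper B" "r \<le> N"
  shows "ut_mult A B k r = (\<Sum>m\<le>N. A k m * B m r)"
proof -
  have "ut_mult A B k r = (\<Sum>m\<in>{k..r}. A k m * B m r)" by (simp add: ut_mult_def)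
  also have "\<dots> = (\<Sum>m\<le>N. A k m * B m r)"
  proof (rule sum.mono_neutral_left)
    show "\<forall>i\<in>{..N} - {k..r}. A k i * B i r = 0"
      using assms by (auto simp: upper_def not_le)
  qed (use assms in auto)
  finally show ?thesis .
qed

lemma upper_mult: "upper A \<Longrightarrow> upper B \<Longrightarrow> upper (ut_mult A B)"
  by (auto simp: upper_def ut_mult_def)

lemma UT_mult: assumes "A \<in> UT" "B \<in> UT" shows "ut_mult A B \<in> UT"
proof -
  have "ut_mult A B i i = 1" for i using assms by (simp add: ut_mult_def UT_diag)
  moreover have "ut_mult A B i j = 0" if "j < i" for i j using that by (simp add: ut_mult_def)
  ultimately show ?thesis by (simp add: UT_def)
qed

lemma mult_assoc:
  assumes "upper A" "upper B" "upper C"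
  shows "ut_mult (ut_mult A B) C = ut_mult A (ut_mult B C)"
proof (intro ext)
  fix k r
  have "ut_mult (ut_mult A B) C k r = (\<Sum>m\<le>r. (\<Sum>p\<le>r. A k p * B p m) * C m r)"
    unfolding mult_le[OF upper_mult[OF assms(1,2)] assms(3) order_refl]
  proof (rule sum.cong)
    fix m assume "m \<in> {..r}"
    then show "ut_mult A B k m * C m r = (\<Sum>p\<le>r. A k p * B p m) * C m r"
      using mult_le[OF assms(1,2), of m r k] by simp
  qed simp
  also have "\<dots> = (\<Sum>p\<le>r. A k p * (\<Sum>m\<le>r. B p m * C m r))"
  proof -
    have "(\<Sum>m\<le>r. (\<Sum>p\<le>r. A k p * B p m) * C m r) = (\<Sum>m\<le>r. \<Sum>p\<le>r. A k p * (B p m * C m r))"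
      by (simp add: sum_distrib_right mult.assoc)
    also have "\<dots> = (\<Sum>p\<le>r. \<Sum>m\<le>r. A k p * (B p m * C m r))"
      by (rule sum.swap)
    also have "\<dots> = (\<Sum>p\<le>r. A k p * (\<Sum>m\<le>r. B p m * C m r))"
      by (simp add: sum_distrib_left)
    finally show ?thesis .
  qed
  also have "\<dots> = ut_mult A (ut_mult B C) k r"
    unfolding mult_le[OF assms(1) upper_mult[OF assms(2,3)] order_refl]
    using mult_le[OF assms(2,3) order_refl] by simp
  finally show "ut_mult (ut_mult A B) C k r = ut_mult A (ut_mult B C) k r" .
qed

lemma upper_one: "upper ut_one" by (simp add: upper_def ut_one_def)
lemma UT_one: "ut_one \<in> UT" by (simp add: UT_def ut_one_def)

lemma mult_one_left: assumes "upper A" shows "ut_mult ut_one A = A"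
proof (intro ext)
  fix k r show "ut_mult ut_one A k r = A k r"
  proof (cases "k \<le> r")
    case True
    have "ut_mult ut_one A k r = (\<Sum>m\<in>{k..r}. (if k = m then A k r else 0))"
      unfolding ut_mult_def ut_one_def by (rule sum.cong) auto
    then show ?thesis using True by simp
  qed (use assms in \<open>auto simp: ut_mult_def upper_def\<close>)
qed

lemma mult_one_right: assumes "upper A" shows "ut_mult A ut_one = A"
proof (intro ext)
  fix k r show "ut_mult A ut_one k r = A k r"
  proof (cases "k \<le> r")
    case True
    have "ut_mult A ut_one k r = (\<Sum>m\<in>{k..r}. (if r = m then A k r else 0))"
      unfolding ut_mult_def ut_one_def by (rule sum.cong) auto
    then show ?thesis using True by simp
  qed (use assms in \<open>auto simp: ut_mult_def upper_def\<close>)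
qed

function binv :: "('a::field) imat \<Rightarrow> nat \<Rightarrow> nat \<Rightarrow> 'a" where
  "binv A i j = (if j < i then 0 else if i = j then 1 else - (\<Sum>k\<in>{Suc i..j}. A i k * binv A k j))"
  by auto
termination by (relation "measure (\<lambda>(A,i,j). j - i)") auto

declare binv.simps[simp del]

lemma binv_diag: "binv A i i = 1" by (subst binv.simps) simp
lemma binv_low: "j < i \<Longrightarrow> binv A i j = 0" by (subst binv.simps) simp

lemma binv_UT: "binv A \<in> UT"
  by (auto simp: UT_def binv_diag binv_low)

lemma binv_right: assumes "A \<in> UT" shows "ut_mult A (binv A) = ut_one"
proof (intro ext)
  fix i j
  show "ut_mult A (binv A) i j = ut_one i j"
  proof (cases "i < j")
    case True
    have "{i..j} = insert i {Suc i..j}" using True by auto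
    hence "ut_mult A (binv A) i j = A i i * binv A i j + (\<Sum>k\<in>{Suc i..j}. A i k * binv A k j)"
      by (simp add: ut_mult_def)
    also have "\<dots> = 0" using True UT_diag[OF assms, of i] by (subst (1) binv.simps) simp
    finally show ?thesis using True by (simp add: ut_one_def)
  next
    case False
    then show ?thesis using UT_diag[OF assms, of i]
      by (cases "i = j") (auto simp: ut_mult_def ut_one_def binv_diag)
  qed
qed

lemma right_inv_unique:
  assumes "A \<in> UT" "B \<in> UT" "C \<in> UT" "ut_mult A B = ut_one" "ut_mult A C = ut_one"
  shows "B = C"
proof -
  have main: "\<forall>k. j - k = n \<longrightarrow> B k j = C k j" for n j
  proof (induction n rule: less_induct)
    case (less n)
    show ?case
    proof (intro allI impI)
      fix k assume kn: "j - k = n"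
      show "B k j = C k j"
      proof (cases "k < j")
        case False
        then show ?thesis using assms(2,3) UT_diag UT_low
          by (metis linorder_neqE_nat)
      next
        case True
        have eqs: "B m j = C m j" if "m \<in> {Suc k..j}" for m
          using less[rule_format, of "j - m" m] that kn by auto
        have "{k..j} = insert k {Suc k..j}" using True by auto
        hence h: "ut_mult A X k j = X k j + (\<Sum>m\<in>{Suc k..j}. A k m * X m j)" for X
          using UT_diag[OF assms(1), of k] by (simp add: ut_mult_def)
        have "B k j + (\<Sum>m\<in>{Suc k..j}. A k m * B m j) = C k j + (\<Sum>m\<in>{Suc k..j}. A k m * C m j)"
          using h[of B] h[of C] assms(4,5) by simp
        moreover have "(\<Sum>m\<in>{Suc k..j}. A k m * B m j) = (\<Sum>m\<in>{Suc k..j}. A k m * C m j)"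
          using eqs by (auto intro: sum.cong)
        ultimately show ?thesis by simp
      qed
    qed
  qed
  show ?thesis using main by blast
qed

lemma inv_eq_binv: "A \<in> UT \<Longrightarrow> ut_inv A = binv A"
  unfolding ut_inv_def
  by (rule the_equality) (auto simp: binv_UT binv_right intro: right_inv_unique[OF _ _ binv_UT])

lemma UT_inv: "A \<in> UT \<Longrightarrow> ut_inv A \<in> UT"
  by (simp add: inv_eq_binv binv_UT)

lemma inv_right: "A \<in> UT \<Longrightarrow> ut_mult A (ut_inv A) = ut_one"
  by (simp add: inv_eq_binv binv_right)

lemma inv_left: assumes "A \<in> UT" shows "ut_mult (ut_inv A) A = ut_one"
proof -
  let ?B = "ut_inv A" let ?C = "ut_inv ?B"
  have B: "?B \<in> UT" and C: "?C \<in> UT" using assms UT_inv by blast+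
  have "A = ut_mult A (ut_mult ?B ?C)" using inv_right[OF B] mult_one_right UT_upper assms by metis
  also have "\<dots> = ut_mult (ut_mult A ?B) ?C" using mult_assoc UT_upper assms B C by metis
  also have "\<dots> = ?C" using inv_right[OF assms] mult_one_left UT_upper C by metis
  finally have "A = ?C" .
  thus ?thesis using inv_right[OF B] by simp
qed

lemma inv_unique: "A \<in> UT \<Longrightarrow> B \<in> UT \<Longrightarrow> ut_mult A B = ut_one \<Longrightarrow> ut_inv A = B"
  using right_inv_unique[of A "ut_inv A" B] UT_inv inv_right by blast


definition colm :: "nat \<Rightarrow> (nat \<Rightarrow> 'a) \<Rightarrow> ('a::field) imat" where
  "colm l d = (\<lambda>k r. ut_one k r + (if r = l \<and> k < l then d k else 0))"

lemma colm_UT: "colm l d \<in> UT"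
  by (auto simp: UT_def colm_def ut_one_def)

lemma sum_lessThan_if: "(\<Sum>m\<le>(N::nat). (if m < l then f m else 0)) = (\<Sum>m<l. f m)" if "l \<le> N"
  using that by (intro sum.mono_neutral_cong_right) auto

lemma mult_colm:
  assumes "upper X"
  shows "ut_mult X (colm l d) k r = X k r + (if r = l then (\<Sum>m<l. X k m * d m) else 0)"
proof -
  have "ut_mult X (colm l d) k r = (\<Sum>m\<le>r. X k m * colm l d m r)"
    by (rule mult_le[OF assms UT_upper[OF colm_UT] order_refl])
  also have "\<dots> = (\<Sum>m\<le>r. (if m = r then X k r else 0)) + (\<Sum>m\<le>r. (if r = l \<and> m < l then X k m * d m else 0))"
  proof -
    have "X k m * colm l d m r = (if m = r then X k r else 0) + (if r = l \<and> m < l then X k m * d m else 0)" for m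
      by (auto simp: colm_def ut_one_def distrib_left)
    then show ?thesis by (simp add: sum.distrib)
  qed
  also have "\<dots> = X k r + (if r = l then (\<Sum>m<l. X k m * d m) else 0)"
    using sum_lessThan_if[of l r "\<lambda>m. X k m * d m"] by auto
  finally show ?thesis .
qed

lemma mult_col_gen:
  assumes "upper A" "upper B" "upper Y" "Y = (\<lambda>k r. A k r + (if r = l then S k else 0))"
  shows "ut_mult Y B k r = ut_mult A B k r + S k * B l r"
proof -
  have "ut_mult Y B k r = (\<Sum>m\<le>r+l. Y k m * B m r)" by (rule mult_le[OF assms(3,2)]) simp
  also have "\<dots> = (\<Sum>m\<le>r+l. A k m * B m r) + (\<Sum>m\<le>r+l. (if m = l then S k * B l r else 0))"
  proof -
    have "Y k m * B m r = A k m * B m r + (if m = l then S k * B l r else 0)" for m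
      by (auto simp: assms(4) distrib_right)
    then show ?thesis by (simp add: sum.distrib)
  qed
  also have "\<dots> = ut_mult A B k r + S k * B l r"
    by (simp add: mult_le[OF assms(1,2), of r "r+l"])
  finally show ?thesis .
qed

lemma colm_inv: "ut_inv (colm l d) = colm l (\<lambda>k. - d k)"
proof (rule inv_unique[OF colm_UT colm_UT], intro ext)
  fix k r
  have "(\<Sum>m<l. colm l d k m * - d m) = (\<Sum>m<l. (if m = k then - d k else 0))"
    by (rule sum.cong) (auto simp: colm_def ut_one_def)
  also have "\<dots> = (if k < l then - d k else 0)" by simp
  finally show "ut_mult (colm l d) (colm l (\<lambda>k. - d k)) k r = ut_one k r"
    by (simp add: mult_colm[OF UT_upper[OF colm_UT]]) (simp add: colm_def)
qed

lemma GC: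
  assumes a: "a \<in> UT"
  shows "ut_comm a (colm l d) = (\<lambda>k r. ut_one k r - (if r = l \<and> k < l then d k else 0)
            + (\<Sum>m<l. a k m * d m) * ut_inv a l r)"
proof (intro ext)
  fix k r
  let ?S = "\<lambda>k. (\<Sum>m<l. a k m * d m)"
  have ua: "upper a" using a by (rule UT_upper)
  have ui: "upper (ut_inv a)" using a UT_inv UT_upper by blast
  have uc: "upper (colm l d)" by (rule UT_upper[OF colm_UT])
  have X1: "ut_mult a (colm l d) = (\<lambda>k r. a k r + (if r = l then ?S k else 0))"
    by (intro ext) (simp add: mult_colm[OF ua])
  have X2: "ut_mult (ut_mult a (colm l d)) (ut_inv a) = (\<lambda>k r. ut_one k r + ?S k * ut_inv a l r)"
  proof (intro ext)
    fix k r show "ut_mult (ut_mult a (colm l d)) (ut_inv a) k r = ut_one k r + ?S k * ut_inv a l r"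
      using mult_col_gen[OF ua ui upper_mult[OF ua uc] X1] inv_right[OF a] by simp
  qed
  have u2: "upper (ut_mult (ut_mult a (colm l d)) (ut_inv a))"
    using upper_mult[OF upper_mult[OF ua uc] ui] .
  have low: "ut_inv a l m = 0" if "m < l" for m using UT_low[OF UT_inv[OF a] that] .
  have "(\<Sum>m<l. (ut_one k m + ?S k * ut_inv a l m) * - d m) = (\<Sum>m<l. (if m = k then - d k else 0))"
    by (rule sum.cong) (auto simp: low ut_one_def)
  also have "\<dots> = (if k < l then - d k else 0)" by simp
  finally have e: "(\<Sum>m<l. (ut_one k m + ?S k * ut_inv a l m) * - d m) = (if k < l then - d k else 0)" .
  show "ut_comm a (colm l d) k r = ut_one k r - (if r = l \<and> k < l then d k else 0) + ?S k * ut_inv a l r"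
  proof -
    have "ut_comm a (colm l d) k r = ut_mult (ut_mult (ut_mult a (colm l d)) (ut_inv a)) (colm l (\<lambda>k. - d k)) k r"
      by (simp add: ut_comm_def colm_inv)
    also have "\<dots> = ut_mult (ut_mult a (colm l d)) (ut_inv a) k r + (if r = l then (\<Sum>m<l. ut_mult (ut_mult a (colm l d)) (ut_inv a) k m * - d m) else 0)"
      by (rule mult_colm[OF u2])
    also have "\<dots> = ut_one k r - (if r = l \<and> k < l then d k else 0) + ?S k * ut_inv a l r"
      unfolding X2 e by auto
    finally show ?thesis .
  qed
qed


lemma colm_cong: "(\<And>k. k < l \<Longrightarrow> v k = w k) \<Longrightarrow> colm l v = colm l w"
  by (auto simp: colm_def intro!: ext)

lemma colm_entry: "k < l \<Longrightarrow> colm l v k l = v k"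
  by (simp add: colm_def ut_one_def)

lemma colm_zero: "colm l (\<lambda>_. 0) = ut_one"
  by (auto simp: colm_def intro!: ext)

definition tv :: "nat \<Rightarrow> nat \<Rightarrow> 'a \<Rightarrow> ('a::field) imat" where
  "tv i j \<alpha> = colm j (\<lambda>k. if k = i then \<alpha> else 0)"

lemma transv_tv: "i < j \<Longrightarrow> transv i j \<alpha> = tv i j \<alpha>"
  by (auto simp: transv_def tv_def colm_def intro!: ext)

lemma tv_UT: "tv i j \<alpha> \<in> UT" by (simp add: tv_def colm_UT)

lemma inv_one: "ut_inv ut_one = ut_one"
  by (rule inv_unique[OF UT_one UT_one]) (simp add: mult_one_left upper_one)

lemma comm_one: "ut_comm ut_one ut_one = ut_one"
  by (simp add: ut_comm_def inv_one mult_one_left upper_one)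

lemma UT_comm: "x \<in> UT \<Longrightarrow> y \<in> UT \<Longrightarrow> ut_comm x y \<in> UT"
  by (simp add: ut_comm_def UT_mult UT_inv)

lemma sum_delta_mult: "(i::nat) < j \<Longrightarrow> (\<Sum>m<j. (f m::'a::field) * (if m = i then 1 else 0)) = f i"
proof -
  assume "i < j"
  have "(\<Sum>m<j. f m * (if m = i then 1 else 0)) = (\<Sum>m<j. (if m = i then f i else 0))"
    by (rule sum.cong) auto
  also have "\<dots> = f i" using \<open>i < j\<close> by (subst sum.delta) auto
  finally show ?thesis .
qed

lemma EXTRACT:
  assumes y: "y \<in> UT" and ij: "i < j"
  shows "ut_comm y (tv i j 1) k j = ut_one k j - (if k = i then 1 else 0) + y k i"
proof -
  have "ut_comm y (tv i j 1) k j = ut_one k j - (if k < j \<and> k = i then 1 else 0)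
       + (\<Sum>m<j. y k m * (if m = i then 1 else 0)) * ut_inv y j j"
    unfolding tv_def GC[OF y] by simp
  also have "\<dots> = ut_one k j - (if k = i then 1 else 0) + y k i"
    using ij UT_diag[OF UT_inv[OF y]] by (simp add: sum_delta_mult)
  finally show ?thesis .
qed

lemma COL:
  assumes "y \<in> UT" "z \<in> UT" "i < j" "ut_comm y (tv i j 1) = ut_comm z (tv i j 1)"
  shows "y k i = z k i"
  using EXTRACT[OF assms(1,3), of k] EXTRACT[OF assms(2,3), of k] assms(4) by simp

lemma row_triv_inv:
  assumes a: "a \<in> UT" and row: "\<And>r. a l r = ut_one l r"
  shows "ut_inv a l r = ut_one l r"
proof -
  have "ut_mult a (ut_inv a) l r = ut_one l r" using inv_right[OF a] by simp
  moreover have "ut_mult a (ut_inv a) l r = ut_inv a l r"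
  proof (cases "l \<le> r")
    case True
    have "ut_mult a (ut_inv a) l r = (\<Sum>m\<in>{l..r}. (if m = l then ut_inv a l r else 0))"
      unfolding ut_mult_def by (rule sum.cong) (auto simp: row ut_one_def)
    then show ?thesis using True by simp
  next
    case False then show ?thesis using UT_low[OF UT_inv[OF a]] by (simp add: ut_mult_def)
  qed
  ultimately show ?thesis by simp
qed

lemma RGC:
  assumes a: "a \<in> UT" and row: "\<And>r. a l r = ut_one l r"
  shows "ut_comm a (colm l d) = colm l (\<lambda>k. (\<Sum>m<l. a k m * d m) - d k)"
proof (intro ext)
  fix k r
  have S0: "(\<Sum>m<l. a k m * d m) = 0" if "l \<le> k"
    by (rule sum.neutral) (use UT_low[OF a] that in auto)
  show "ut_comm a (colm l d) k r = colm l (\<lambda>k. (\<Sum>m<l. a k m * d m) - d k) k r"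
    unfolding GC[OF a] row_triv_inv[OF a row]
    using S0 by (auto simp: colm_def ut_one_def)
qed

lemma CT:
  assumes a: "a \<in> UT" and row: "\<And>r. a j r = ut_one j r" and ij: "i < j"
  shows "ut_comm a (tv i j 1) = colm j (\<lambda>k. a k i - ut_one k i)"
  unfolding tv_def RGC[OF a row]
  by (rule colm_cong) (simp add: sum_delta_mult ij ut_one_def)

lemma CT0:
  assumes "0 < k0" "k0 < l"
  shows "ut_comm (tv 0 k0 1) (colm l d) = tv 0 l (d k0)"
proof -
  have row: "tv 0 k0 1 l r = ut_one l r" for r using assms by (simp add: tv_def colm_def)
  have "(\<Sum>m<l. tv 0 k0 1 k m * d m) = (\<Sum>m<l. (if m = k then d k else 0) + (if k = 0 \<and> m = k0 then d k0 else 0))" for k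
    by (rule sum.cong) (use assms in \<open>auto simp: tv_def colm_def ut_one_def\<close>)
  hence eq: "(\<Sum>m<l. tv 0 k0 1 k m * d m) = (if k < l then d k else 0) + (if k = 0 then d k0 else 0)" for k
    using assms by (simp add: sum.distrib)
  have "ut_comm (tv 0 k0 1) (colm l d) = colm l (\<lambda>k. (\<Sum>m<l. tv 0 k0 1 k m * d m) - d k)"
    by (rule RGC[OF tv_UT row])
  also have "\<dots> = tv 0 l (d k0)"
    unfolding tv_def[of 0 l] by (rule colm_cong) (simp add: eq)
  finally show ?thesis .
qed


locale pcm =
  fixes \<phi> :: "('a::field) imat \<Rightarrow> 'a imat"
  assumes pc: "PC_map \<phi>" and ai: "almost_identity \<phi>"
begin

lemma phi_UT: "x \<in> UT \<Longrightarrow> \<phi> x \<in> UT"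
  using pc by (auto simp: PC_map_def bij_betw_def)

lemma phi_comm: "x \<in> UT \<Longrightarrow> y \<in> UT \<Longrightarrow> \<phi> (ut_comm x y) = ut_comm (\<phi> x) (\<phi> y)"
  using pc by (auto simp: PC_map_def)

lemma phi_one: "\<phi> ut_one = ut_one"
  using phi_comm[OF UT_one UT_one] comm_one phi_UT[OF UT_one]
  by (metis inv_right ut_comm_def UT_inv UT_upper mult_assoc mult_one_right)

lemma phi_tv: "i < j \<Longrightarrow> \<phi> (tv i j \<alpha>) = tv i j \<alpha>"
  using ai by (auto simp: almost_identity_def transv_tv)

lemma FIX:
  assumes x: "x \<in> UT" and h: "\<And>i. \<exists>j>i. \<phi> (ut_comm x (tv i j 1)) = ut_comm x (tv i j 1)"
  shows "\<phi> x = x"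
proof (intro ext)
  fix k i
  obtain j where j: "i < j" "\<phi> (ut_comm x (tv i j 1)) = ut_comm x (tv i j 1)" using h by blast
  have "ut_comm (\<phi> x) (tv i j 1) = ut_comm x (tv i j 1)"
    using j phi_comm[OF x tv_UT] phi_tv[OF j(1)] by simp
  then show "\<phi> x k i = x k i" using COL[OF phi_UT[OF x] x j(1)] by blast
qed

lemma S1:
  assumes l: "0 < l"
  shows "\<phi> (colm l d) = colm l (\<lambda>k. if k = 0 then \<phi> (colm l d) 0 l else d k)"
proof -
  let ?h = "colm l d" let ?y = "\<phi> ?h"
  have y: "?y \<in> UT" by (rule phi_UT[OF colm_UT])
  have a: "?y k i = ut_one k i" if il: "i \<noteq> l" for k i
  proof -
    define j where "j = Suc (max i l)"
    have ij: "i < j" and lj: "l < j" by (auto simp: j_def)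
    have row: "?h j r = ut_one j r" for r using lj by (simp add: colm_def)
    have "ut_comm ?h (tv i j 1) = colm j (\<lambda>k. ?h k i - ut_one k i)" by (rule CT[OF colm_UT row ij])
    also have "\<dots> = colm j (\<lambda>_. 0)" using il by (intro colm_cong) (simp add: colm_def)
    finally have "ut_comm ?h (tv i j 1) = ut_one" by (simp add: colm_zero)
    hence "ut_comm ?y (tv i j 1) = ut_one"
      using phi_comm[OF colm_UT tv_UT, of l d i j 1] phi_tv[OF ij] phi_one by simp
    thus ?thesis using EXTRACT[OF y ij, of k] by (simp add: ut_one_def)
  qed
  have yc: "?y = colm l (\<lambda>k. ?y k l)"
  proof (intro ext)
    fix k r show "?y k r = colm l (\<lambda>k. ?y k l) k r"
    proof (cases "r = l")
      case True
      then show ?thesis using UT_diag[OF y, of l] UT_low[OF y, of l k]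
        by (cases k l rule: linorder_cases) (auto simp: colm_def ut_one_def)
    next
      case False
      then show ?thesis using a[of r k] by (simp add: colm_def)
    qed
  qed
  have b: "?y k0 l = d k0" if "0 < k0" "k0 < l" for k0
  proof -
    have "tv 0 l (d k0) = \<phi> (ut_comm (tv 0 k0 1) ?h)" by (simp only: CT0[OF that] phi_tv[OF l])
    also have "\<dots> = ut_comm (tv 0 k0 1) ?y" using phi_comm[OF tv_UT colm_UT] phi_tv that by simp
    also have "\<dots> = tv 0 l (?y k0 l)" by (subst yc, subst CT0[OF that]) simp
    finally have "tv 0 l (d k0) 0 l = tv 0 l (?y k0 l) 0 l" by simp
    thus ?thesis using l by (simp add: tv_def colm_entry)
  qed
  show ?thesis by (subst yc) (intro colm_cong, auto simp: b)
qed


lemma Q: "n \<le> L \<Longrightarrow> \<phi> (colm L (\<lambda>k. if k < n then d k else 0)) = colm L (\<lambda>k. if k < n then d k else 0)"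
proof (induction n arbitrary: d L)
  case 0
  then show ?case by (simp add: colm_zero phi_one)
next
  case (Suc n)
  define D where "D = (\<lambda>k. if k < Suc n then d k else (0::'a))"
  define c where "c = (\<lambda>k. if k < n then d k else (0::'a))"
  define c' where "c' = (\<lambda>k. if k = n then d n else (0::'a))"
  define k1 where "k1 = Suc n"
  define k2 where "k2 = Suc (Suc n)"
  define L' where "L' = L + 3"
  define a where "a = (\<lambda>k r. ut_one k r + (if r = k1 then c k else 0) + (if r = k2 then c' k else 0))"
  have L0: "0 < L" and LL': "L < L'" and k2L: "k2 < L'" using Suc.prems by (auto simp: L'_def k2_def)
  have aUT: "a \<in> UT"
    by (auto simp: UT_def a_def ut_one_def c_def c'_def k1_def k2_def)
  have arow: "a j r = ut_one j r" if "k2 < j" for j r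
    using that by (auto simp: a_def c_def c'_def k1_def k2_def)
  have IHc: "\<phi> (colm j c) = colm j c" if "n \<le> j" for j
    unfolding c_def by (rule Suc.IH[OF that])
  have phia: "\<phi> a = a"
  proof (rule FIX[OF aUT])
    fix i
    define j where "j = Suc (max i k2)"
    have ij: "i < j" and k2j: "k2 < j" by (auto simp: j_def)
    have nj: "n < j" using k2j by (simp add: k2_def)
    have ct: "ut_comm a (tv i j 1) = colm j (\<lambda>k. a k i - ut_one k i)"
      by (rule CT[OF aUT arow[OF k2j] ij])
    have "\<phi> (colm j (\<lambda>k. a k i - ut_one k i)) = colm j (\<lambda>k. a k i - ut_one k i)"
    proof -
      consider "i = k1" | "i = k2" | "i \<noteq> k1" "i \<noteq> k2" by blast
      then show ?thesis
      proof cases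
        case 1
        then have "(\<lambda>k. a k i - ut_one k i) = c" by (auto simp: a_def k1_def k2_def)
        then show ?thesis using IHc nj by simp
      next
        case 2
        then have "(\<lambda>k. a k i - ut_one k i) = (\<lambda>k. if k = n then d n else 0)"
          by (auto simp: a_def k1_def k2_def c'_def)
        then show ?thesis using phi_tv[OF nj, of "d n"] by (simp add: tv_def)
      next
        case 3
        then have "(\<lambda>k. a k i - ut_one k i) = (\<lambda>_. 0)" by (auto simp: a_def)
        then show ?thesis by (simp add: colm_zero phi_one)
      qed
    qed
    then show "\<exists>j>i. \<phi> (ut_comm a (tv i j 1)) = ut_comm a (tv i j 1)" using ij ct by auto
  qed
  define w where "w = (\<lambda>\<mu> m. if m = 0 then \<mu> else if m = k1 \<or> m = k2 then 1 else (0::'a))"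
  have cw: "ut_comm a (colm L' (w \<mu>)) = colm L' D" for \<mu>
  proof -
    have s: "(\<Sum>m<L'. a k m * w \<mu> m) = (\<Sum>m<L'. (if m = 0 then a k 0 * \<mu> else 0) + (if m = k1 then a k k1 else 0) + (if m = k2 then a k k2 else 0))" for k
      by (rule sum.cong) (auto simp: w_def k1_def k2_def)
    have s2: "(\<Sum>m<L'. a k m * w \<mu> m) = a k 0 * \<mu> + a k k1 + a k k2" for k
      unfolding s sum.distrib using k2L L0 LL' by (simp add: k1_def k2_def)
    have s3: "a k 0 * \<mu> + a k k1 + a k k2 - w \<mu> k = D k" for k
      by (auto simp: a_def w_def D_def c_def c'_def ut_one_def k1_def k2_def)
    show ?thesis
      unfolding RGC[OF aUT arow[OF k2L]]
      by (intro colm_cong) (simp only: s2 s3)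
  qed
  obtain \<mu>0 where phib: "\<phi> (colm L' (w 0)) = colm L' (w \<mu>0)"
  proof -
    have "\<phi> (colm L' (w 0)) = colm L' (\<lambda>k. if k = 0 then \<phi> (colm L' (w 0)) 0 L' else w 0 k)"
      using S1 L0 LL' by simp
    also have "\<dots> = colm L' (w (\<phi> (colm L' (w 0)) 0 L'))"
      by (rule colm_cong) (simp add: w_def)
    finally show ?thesis using that by blast
  qed
  have phiL': "\<phi> (colm L' D) = colm L' D"
    using phi_comm[OF aUT colm_UT, of L' "w 0"] cw[of 0] cw[of \<mu>0] phia phib by simp
  have DL: "D k = 0" if "L \<le> k" for k using that Suc.prems by (simp add: D_def)
  let ?y = "\<phi> (colm L D)"
  have yS1: "?y = colm L (\<lambda>k. if k = 0 then ?y 0 L else D k)" by (rule S1[OF L0])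
  have rowL': "colm L D L' r = ut_one L' r" for r using LL' by (simp add: colm_def)
  have e1: "ut_comm (colm L D) (tv L L' 1) = colm L' D"
    unfolding CT[OF colm_UT rowL' LL']
    by (rule colm_cong) (auto simp: colm_def ut_one_def DL)
  have "ut_comm ?y (tv L L' 1) = colm L' D"
    using phi_comm[OF colm_UT tv_UT, of L D L L' 1] phi_tv[OF LL'] e1 phiL' by simp
  moreover have "ut_comm ?y (tv L L' 1) 0 L' = ?y 0 L"
    using EXTRACT[OF phi_UT[OF colm_UT[of L D]] LL', of 0] L0 LL' by (simp add: ut_one_def)
  ultimately have "?y 0 L = D 0" using colm_entry[of 0 L' D] LL' by simp
  hence "colm L (\<lambda>k. if k = 0 then ?y 0 L else D k) = colm L D" by (intro colm_cong) simp
  hence "?y = colm L D" using yS1 by simp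
  then show ?case by (simp add: D_def)
qed

lemma S2:
  assumes h: "h \<in> UT" and row: "\<And>k r. n \<le> k \<Longrightarrow> h k r = ut_one k r"
  shows "\<phi> h = h"
proof (rule FIX[OF h])
  fix i
  define j where "j = Suc (max i n)"
  have ij: "i < j" and nj: "n \<le> j" by (auto simp: j_def)
  have "ut_comm h (tv i j 1) = colm j (\<lambda>k. h k i - ut_one k i)"
    by (rule CT[OF h row[OF nj] ij])
  also have "\<dots> = colm j (\<lambda>k. if k < j then h k i - ut_one k i else 0)"
    by (rule colm_cong) simp
  finally have "\<phi> (ut_comm h (tv i j 1)) = ut_comm h (tv i j 1)" using Q[of j j] by simp
  then show "\<exists>j>i. \<phi> (ut_comm h (tv i j 1)) = ut_comm h (tv i j 1)" using ij by blast
qed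

lemma main: assumes g: "g \<in> UT" shows "\<phi> g = g"
proof (rule FIX[OF g])
  fix i
  let ?h = "ut_comm g (tv i (Suc i) 1)"
  have row: "?h k r = ut_one k r" if "Suc i \<le> k" for k r
  proof -
    have "(\<Sum>m<Suc i. g k m * (if m = i then 1 else 0)) = g k i" by (rule sum_delta_mult) simp
    also have "\<dots> = 0" using UT_low[OF g] that by simp
    finally show ?thesis using that unfolding tv_def GC[OF g] by simp
  qed
  have "\<phi> ?h = ?h" by (rule S2[OF UT_comm[OF g tv_UT] row])
  then show "\<exists>j>i. \<phi> (ut_comm g (tv i j 1)) = ut_comm g (tv i j 1)" by blast
qed

end

theorem mainTheorem6:
  fixes \<phi> :: "('a::field) imat \<Rightarrow> 'a imat"
  assumes "PC_map \<phi>" and "almost_identity \<phi>"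
  shows "\<forall>x\<in>UT. \<phi> x = x"
proof -
  interpret pcm \<phi> using assms by unfold_locales
  show ?thesis using main by blast
qed

end
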